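(* Let $\mathcal{G}_{36}$ be the network described in the context, with nodes $(i,j)$, $1\le i\le 3$, $1\le j\le 6$. Consider the coloring $K$ of its nodes with five colors $a_0,a_1,a_2,b_1,b_2$ defined by: for $1\le j\le 3$, node $(i,j)$ has color $a_r$ where $r\equiv j-i \pmod 3$, $r\in\{0,1,2\}$; for $4\le j\le 6$, node $(i,j)$ has color $b_1$ if $j-3=i$ and color $b_2$ if $j-3\neq i$. Then $K$ is balanced, but $K$ is not an orbit coloring, i.e. there is no subgroup $\Sigma\subseteq \mathbb{S}_3\times\mathbb{S}_6$ whose orbits on the node set are exactly the color classes of $K$.
   Context: For integers $m,n\ge1$, the network $\mathcal{G}_{mn}$ has node set $\{(i,j):1\le i\le m,\ 1\le j\le n\}$ (an $m\times n$ array; $i$ indexes rows, $j$ columns), all nodes of the same type. For each ordered pair of distinct nodes $(c,d)$ there is exactly one arrow with head $c$ and tail $d$, whose type is: "row" if $c,d$ lie in the same row, "column" if they lie in the same column, "diagonal" otherwise; in addition each node has an internal arrow from itself to itself (a fourth type). The group $\mathbb{S}_m\times\mathbb{S}_n$ acts on the nodes by $(\sigma,\tau)\cdot(i,j)=(\sigma(i),\tau(j))$; these permutations preserve arrow types and form the symmetry group of $\mathcal{G}_{mn}$. A coloring is a map from nodes to a set of colors (colorings are identified if they induce the same partition of the nodes). A coloring is balanced if whenever nodes $c,d$ have the same color there is a bijection between the input arrows of $c$ and those of $d$ preserving arrow type and the color of the tail node; equivalently, for every arrow type and every color $k$, the number of input arrows of that type to $c$ with tail of color $k$ equals the corresponding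 number for $d$. For a subgroup $\Sigma$ of the symmetry group, the orbit coloring of $\Sigma$ is the coloring whose color classes are the $\Sigma$-orbits on nodes; a coloring is an orbit coloring if it equals the orbit coloring of some such subgroup. *)

theory Defs
  imports "HOL-Algebra.Sym_Groups"
begin

definition nodes :: "nat \<Rightarrow> nat \<Rightarrow> (nat \<times> nat) set" where
  "nodes m n = {1..m} \<times> {1..n}"

datatype arrow_type = RowArrow | ColumnArrow | DiagonalArrow | InternalArrow

text \<open>Type of the unique arrow with head c and tail d.\<close>
definition arrow_type :: "nat \<times> nat \<Rightarrow> nat \<times> nat \<Rightarrow> arrow_type" where
  "arrow_type c d =
     (if c = d then InternalArrow
      else if fst c = fst d then RowArrow
      else if snd c = snd d then ColumnArrow
      else DiagonalArrow)"

definition input_count ::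
    "nat \<Rightarrow> nat \<Rightarrow> (nat \<times> nat \<Rightarrow> 'c) \<Rightarrow> arrow_type \<Rightarrow> 'c \<Rightarrow> nat \<times> nat \<Rightarrow> nat" where
  "input_count m n K t k c = card {d \<in> nodes m n. arrow_type c d = t \<and> K d = k}"

definition balanced :: "nat \<Rightarrow> nat \<Rightarrow> (nat \<times> nat \<Rightarrow> 'c) \<Rightarrow> bool" where
  "balanced m n K \<longleftrightarrow>
     (\<forall>c\<in>nodes m n. \<forall>d\<in>nodes m n. K c = K d \<longrightarrow>
        (\<forall>t k. input_count m n K t k c = input_count m n K t k d))"

abbreviation symmetry_group :: "nat \<Rightarrow> nat \<Rightarrow> ((nat \<Rightarrow> nat) \<times> (nat \<Rightarrow> nat)) monoid" where
  "symmetry_group m n \<equiv> sym_group m \<times>\<times> sym_group n"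

definition act :: "(nat \<Rightarrow> nat) \<times> (nat \<Rightarrow> nat) \<Rightarrow> nat \<times> nat \<Rightarrow> nat \<times> nat" where
  "act g x = (fst g (fst x), snd g (snd x))"

text \<open>K is the orbit coloring of \<Sigma>: two nodes have the same color iff they lie in the
  same \<Sigma>-orbit (colorings are identified up to renaming of colors).\<close>
definition is_orbit_coloring_of ::
    "nat \<Rightarrow> nat \<Rightarrow> (nat \<times> nat \<Rightarrow> 'c) \<Rightarrow> ((nat \<Rightarrow> nat) \<times> (nat \<Rightarrow> nat)) set \<Rightarrow> bool" where
  "is_orbit_coloring_of m n K \<Sigma> \<longleftrightarrow>
     (\<forall>x\<in>nodes m n. \<forall>y\<in>nodes m n. K x = K y \<longleftrightarrow> (\<exists>g\<in>\<Sigma>. act g x = y))"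

definition orbit_coloring :: "nat \<Rightarrow> nat \<Rightarrow> (nat \<times> nat \<Rightarrow> 'c) \<Rightarrow> bool" where
  "orbit_coloring m n K \<longleftrightarrow>
     (\<exists>\<Sigma>. subgroup \<Sigma> (symmetry_group m n) \<and> is_orbit_coloring_of m n K \<Sigma>)"

datatype color = a nat | b nat

definition K36 :: "nat \<times> nat \<Rightarrow> color" where
  "K36 x = (let i = fst x; j = snd x in
     if j \<le> 3 then a (nat ((int j - int i) mod 3))
     else if j - 3 = i then b 1 else b 2)"

end

theory Submission
  imports Defs
begin

definition L :: "(nat \<times> nat) list" where
  "L = [(1,1),(1,2),(1,3),(1,4),(1,5),(1,6),(2,1),(2,2),(2,3),(2,4),(2,5),(2,6),(3,1),(3,2),(3,3),(3,4),(3,5),(3,6)]"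

lemma nodesL: "nodes 3 6 = set L"
proof -
  have a: "{1..3::nat} = {1,2,3}" by auto
  have b: "{1..6::nat} = {1,2,3,4,5,6}" by auto
  show ?thesis unfolding nodes_def a b L_def by auto
qed

lemma distL: "distinct L" by (simp add: L_def)

definition cnt where "cnt c t k = length (filter (\<lambda>d. arrow_type c d = t \<and> K36 d = k) L)"

lemma ic: "input_count 3 6 K36 t k c = cnt c t k"
proof -
  have "input_count 3 6 K36 t k c = card (set (filter (\<lambda>d. arrow_type c d = t \<and> K36 d = k) L))"
    unfolding input_count_def nodesL set_filter ..
  also have "\<dots> = cnt c t k" unfolding cnt_def by (rule distinct_card[OF distinct_filter[OF distL]])
  finally show ?thesis .
qed

fun rep :: "color \<Rightarrow> nat \<times> nat" where
  "rep (a r) = (1, 1 + r)" | "rep (b n) = (if n = 1 then (1,4) else (1,5))"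

lemma key: "c \<in> set L \<Longrightarrow> k \<in> {a 0, a 1, a 2, b 1, b 2} \<Longrightarrow> cnt c t k = cnt (rep (K36 c)) t k"
  unfolding cnt_def
  apply (cases t)
  apply (simp only: L_def list.set insert_iff empty_iff; elim disjE; simp add: arrow_type_def K36_def)+
  done

lemma K36_range: "K36 x \<in> {a 0, a 1, a 2, b 1, b 2}"
proof -
  have "nat ((int j - int i) mod 3) < 3" for i j by (simp add: nat_less_iff)
  then have "nat ((int j - int i) mod 3) \<in> {0,1,2}" for i j
    by (metis insert_iff less_Suc_eq numeral_3_eq_3 One_nat_def Suc_1 less_one)
  then show ?thesis by (auto simp: K36_def Let_def)
qed

lemma cnt0: "k \<notin> {a 0, a 1, a 2, b 1, b 2} \<Longrightarrow> cnt c t k = 0"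
  unfolding cnt_def using K36_range by (metis (mono_tags, lifting) filter_False list.size(3))

lemma bal: "balanced 3 6 K36"
  unfolding balanced_def ic nodesL
proof (intro ballI impI allI)
  fix c d t k assume c: "c \<in> set L" and d: "d \<in> set L" and e: "K36 c = K36 d"
  show "cnt c t k = cnt d t k"
  proof (cases "k \<in> {a 0, a 1, a 2, b 1, b 2}")
    case True
    then show ?thesis using key[OF c True, of t] key[OF d True, of t] e by simp
  next
    case False
    then show ?thesis using cnt0 by simp
  qed
qed

lemma not_orbit: "\<not> orbit_coloring 3 6 K36"
proof
  assume "orbit_coloring 3 6 K36"
  then obtain S where sub: "subgroup S (symmetry_group 3 6)" and orb: "is_orbit_coloring_of 3 6 K36 S"
    unfolding orbit_coloring_def by blast
  have n15: "(1::nat,5::nat) \<in> nodes 3 6" and n16: "(1::nat,6::nat) \<in> nodes 3 6" by (auto simp: nodes_def)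
  have "K36 (1,5) = K36 (1,6)" by (simp add: K36_def)
  then obtain g where gS: "g \<in> S" and ga: "act g (1,5) = (1,6)"
    using orb n15 n16 unfolding is_orbit_coloring_of_def by blast
  have "g \<in> carrier (symmetry_group 3 6)" using sub gS subgroup.subset by blast
  then have ps: "fst g permutes {1..3}" and pt: "snd g permutes {1..6}"
    by (auto simp: DirProd_def sym_group_def)
  have pres: "K36 (act g x) = K36 x" if "x \<in> nodes 3 6" for x
  proof -
    have "fst x \<in> {1..3}" "snd x \<in> {1..6}" using that by (auto simp: nodes_def mem_Times_iff)
    then have "fst g (fst x) \<in> {1..3}" "snd g (snd x) \<in> {1..6}"
      using ps pt permutes_in_image by metis+
    then have "act g x \<in> nodes 3 6" by (simp add: nodes_def act_def mem_Times_iff)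
    moreover have "\<forall>x\<in>nodes 3 6. \<forall>y\<in>nodes 3 6. K36 x = K36 y \<longleftrightarrow> (\<exists>g\<in>S. act g x = y)"
      using orb unfolding is_orbit_coloring_of_def by blast
    ultimately have "K36 x = K36 (act g x)" using that gS by blast
    then show ?thesis by simp
  qed
  define s where "s = fst g"
  define t where "t = snd g"
  have s1: "s 1 = 1" and t5: "t 5 = 6" using ga by (auto simp: act_def s_def t_def)
  have sr: "s x \<in> {1..3}" if "x \<in> {1..3}" for x using ps that permutes_in_image s_def by metis
  have tr: "t x \<in> {1..6}" if "x \<in> {1..6}" for x using pt that permutes_in_image t_def by metis
  have c11: "K36 (1, t 1) = K36 (1,1)" using pres[of "(1,1)"] s1 by (simp add: nodes_def act_def s_def t_def)
  have t1: "t 1 = 1"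
  proof -
    have "t 1 \<in> {1..6}" using tr by auto
    then have "t 1 = 1 \<or> t 1 = 2 \<or> t 1 = 3 \<or> t 1 = 4 \<or> t 1 = 5 \<or> t 1 = 6" by auto
    then show ?thesis using c11 by (auto simp: K36_def)
  qed
  have c25: "K36 (s 2, 6) = K36 (2,5)" using pres[of "(2,5)"] t5 by (simp add: nodes_def act_def s_def t_def)
  have s2: "s 2 = 3"
  proof -
    have "s 2 \<in> {1..3}" using sr by auto
    then have "s 2 = 1 \<or> s 2 = 2 \<or> s 2 = 3" by auto
    then show ?thesis using c25 by (auto simp: K36_def)
  qed
  have "K36 (s 2, t 1) = K36 (2,1)" using pres[of "(2,1)"] by (simp add: nodes_def act_def s_def t_def)
  then show False using s2 t1 by (simp add: K36_def)
qed

theorem mainTheorem1: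
  shows "balanced 3 6 K36 \<and> \<not> orbit_coloring 3 6 K36"
  using bal not_orbit by blast

end
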